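(* Let $u\in\mathcal F$ be a feasible flow. Then $u$ is implementable (i.e., there exists $\lambda\in\mathbb{R}^J_{\geq 0}$ with $u\in\mathrm{WE}(\lambda)$) if and only if $u$ is an optimal solution of the linear program \[ \min_{x\in\mathcal F}\ \sum_{(i,p)\in\mathcal P}\tau_{i,p}(u)\, x_{i,p}\quad\text{s.t.}\quad \sum_{(i,p)\in\mathcal P} g_{i,p,j}(u)\, x_{i,p}\le G_j(u)\ \text{ for all } j\in J. \]
   Context: Let $G=(V,E)$ be a directed graph and $I$ a finite set of commodities; commodity $i$ has source $s_i$, sink $t_i$ and demand $d_i>0$. $\mathcal P_i$ is the set of simple $s_i$–$t_i$ paths and $\mathcal P=\{(i,p): i\in I, p\in\mathcal P_i\}$. A flow is $x\in\mathbb{R}^{\mathcal P}_{\ge 0}$; it is feasible if $\sum_{p\in\mathcal P_i}x_{i,p}=d_i$ for all $i$; $\mathcal F$ is the set of feasible flows. $J$ is a finite set of externality classes with externality functions $g_{i,p,j}:\mathcal F\to\mathbb{R}_{\ge 0}$, and $G_j(x)=\sum_{(i,p)\in\mathcal P}g_{i,p,j}(x)\,x_{i,p}$. Travel time functions $\tau_{i,p}:\mathcal F\to\mathbb{R}$ are arbitrary. For $\lambda\in\mathbb{R}^J_{\ge0}$ the cost is $c^\lambda_{i,p}(x)=\tau_{i,p}(x)+\sum_{j\in J}\lambda_j g_{i,p,j}(x)$. A feasible flow $x$ is a Wardrop equilibrium w.r.t. $c^\lambda$ if for all $i\in I$, $p\in\mathcal P_i$: $x_{i,p}>0$ implies $c^\lambda_{i,p}(x)\le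 c^\lambda_{i,q}(x)$ for all $q\in\mathcal P_i$. $\mathrm{WE}(\lambda)$ denotes the set of such equilibria. *)

theory Defs
  imports Complex_Main
begin

definition simple_path :: "('v \<times> 'v) set \<Rightarrow> 'v \<Rightarrow> 'v \<Rightarrow> 'v list \<Rightarrow> bool" where
  "simple_path E s t p \<longleftrightarrow> p \<noteq> [] \<and> hd p = s \<and> last p = t \<and> distinct p \<and>
     (\<forall>k. Suc k < length p \<longrightarrow> (p ! k, p ! Suc k) \<in> E)"

definition paths :: "('v \<times> 'v) set \<Rightarrow> 'v \<Rightarrow> 'v \<Rightarrow> 'v list set" where
  "paths E s t = {p. simple_path E s t p}"

definition Pset :: "'i set \<Rightarrow> ('v \<times> 'v) set \<Rightarrow> ('i \<Rightarrow> 'v) \<Rightarrow> ('i \<Rightarrow> 'v) \<Rightarrow> ('i \<times> 'v list) set" where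
  "Pset I E s t = {(i, p). i \<in> I \<and> p \<in> paths E (s i) (t i)}"

text \<open>A flow in R^P is represented by a function on all pairs that vanishes outside P.\<close>
definition feasible ::
  "'i set \<Rightarrow> ('v \<times> 'v) set \<Rightarrow> ('i \<Rightarrow> 'v) \<Rightarrow> ('i \<Rightarrow> 'v) \<Rightarrow> ('i \<Rightarrow> real)
   \<Rightarrow> ('i \<times> 'v list \<Rightarrow> real) \<Rightarrow> bool" where
  "feasible I E s t d x \<longleftrightarrow>
     (\<forall>ip \<in> Pset I E s t. x ip \<ge> 0) \<and> (\<forall>ip. ip \<notin> Pset I E s t \<longrightarrow> x ip = 0) \<and>
     (\<forall>i \<in> I. (\<Sum>p \<in> paths E (s i) (t i). x (i, p)) = d i)"

definition Gext ::
  "('i \<times> 'v list) set \<Rightarrow> ('i \<times> 'v list \<Rightarrow> 'j \<Rightarrow> ('i \<times> 'v list \<Rightarrow> real) \<Rightarrow> real)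
   \<Rightarrow> 'j \<Rightarrow> ('i \<times> 'v list \<Rightarrow> real) \<Rightarrow> real" where
  "Gext P g j x = (\<Sum>ip \<in> P. g ip j x * x ip)"

definition cost ::
  "'j set \<Rightarrow> ('i \<times> 'v list \<Rightarrow> ('i \<times> 'v list \<Rightarrow> real) \<Rightarrow> real)
   \<Rightarrow> ('i \<times> 'v list \<Rightarrow> 'j \<Rightarrow> ('i \<times> 'v list \<Rightarrow> real) \<Rightarrow> real)
   \<Rightarrow> ('j \<Rightarrow> real) \<Rightarrow> 'i \<times> 'v list \<Rightarrow> ('i \<times> 'v list \<Rightarrow> real) \<Rightarrow> real" where
  "cost J tau g lam ip x = tau ip x + (\<Sum>j \<in> J. lam j * g ip j x)"

definition wardrop ::
  "'i set \<Rightarrow> ('v \<times> 'v) set \<Rightarrow> ('i \<Rightarrow> 'v) \<Rightarrow> ('i \<Rightarrow> 'v) \<Rightarrow> ('i \<Rightarrow> real) \<Rightarrow> 'j set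
   \<Rightarrow> ('i \<times> 'v list \<Rightarrow> ('i \<times> 'v list \<Rightarrow> real) \<Rightarrow> real)
   \<Rightarrow> ('i \<times> 'v list \<Rightarrow> 'j \<Rightarrow> ('i \<times> 'v list \<Rightarrow> real) \<Rightarrow> real)
   \<Rightarrow> ('j \<Rightarrow> real) \<Rightarrow> ('i \<times> 'v list \<Rightarrow> real) \<Rightarrow> bool" where
  "wardrop I E s t d J tau g lam x \<longleftrightarrow> feasible I E s t d x \<and>
     (\<forall>i \<in> I. \<forall>p \<in> paths E (s i) (t i). x (i, p) > 0 \<longrightarrow>
        (\<forall>q \<in> paths E (s i) (t i). cost J tau g lam (i, p) x \<le> cost J tau g lam (i, q) x))"

definition implementable where
  "implementable I E s t d J tau g u \<longleftrightarrow>
     (\<exists>lam :: 'j \<Rightarrow> real. (\<forall>j \<in> J. lam j \<ge> 0) \<and> wardrop I E s t d J tau g lam u)"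

definition lp_optimal where
  "lp_optimal I E s t d J tau g u \<longleftrightarrow>
     (let P = Pset I E s t;
          admissible = (\<lambda>x. feasible I E s t d x \<and>
             (\<forall>j \<in> J. (\<Sum>ip \<in> P. g ip j u * x ip) \<le> Gext P g j u))
      in admissible u \<and>
         (\<forall>x. admissible x \<longrightarrow> (\<Sum>ip \<in> P. tau ip u * u ip) \<le> (\<Sum>ip \<in> P. tau ip u * x ip)))"

end

theory Submission
  imports Defs
begin

lemma between_exists:
  fixes L U :: "real set"
  assumes "finite L" "finite U" "\<forall>l\<in>L. \<forall>v\<in>U. l \<le> v"
  shows "\<exists>t. (\<forall>l\<in>L. l \<le> t) \<and> (\<forall>v\<in>U. t \<le> v)"
proof (cases "L = {}")
  case True
  show ?thesis
  proof (cases "U = {}")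
    case True then show ?thesis using \<open>L = {}\<close> by auto
  next
    case False then show ?thesis using \<open>L = {}\<close> assms by (intro exI[of _ "Min U"]) auto
  qed
next
  case False then show ?thesis using assms by (intro exI[of _ "Max L"]) auto
qed

lemma lift_coeffs:
  fixes y :: "'r \<Rightarrow> real"
  assumes "finite D" "R \<subseteq> f ` D" "\<forall>r\<in>R. y r \<ge> 0"
  shows "\<exists>z. (\<forall>x\<in>D. z x \<ge> 0) \<and> (\<forall>h::'r\<Rightarrow>real. (\<Sum>x\<in>D. z x * h (f x)) = (\<Sum>r\<in>R. y r * h r))"
proof -
  define rep where "rep r = (SOME x. x \<in> D \<and> f x = r)" for r
  have rep: "rep r \<in> D \<and> f (rep r) = r" if "r \<in> R" for r
    using someI_ex[of "\<lambda>x. x \<in> D \<and> f x = r"] that assms(2) unfolding rep_def by blast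
  have inj: "inj_on rep R" by (metis inj_onI rep)
  define z where "z x = (if x \<in> rep ` R then y (f x) else 0)" for x
  have sub: "rep ` R \<subseteq> D" using rep by blast
  show ?thesis
  proof (intro exI[of _ z] conjI allI ballI)
    show "0 \<le> z x" if "x \<in> D" for x using assms(3) rep unfolding z_def by auto
    fix h :: "'r \<Rightarrow> real"
    have "(\<Sum>x\<in>D. z x * h (f x)) = (\<Sum>x\<in>rep ` R. z x * h (f x))"
      by (rule sum.mono_neutral_right[OF assms(1) sub]) (auto simp: z_def)
    also have "\<dots> = (\<Sum>r\<in>R. z (rep r) * h (f (rep r)))" by (rule sum.reindex[OF inj, unfolded comp_def])
    also have "\<dots> = (\<Sum>r\<in>R. y r * h r)" by (rule sum.cong) (auto simp: z_def rep)
    finally show "(\<Sum>x\<in>D. z x * h (f x)) = (\<Sum>r\<in>R. y r * h r)" .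
  qed
qed

lemma farkas_rows:
  fixes R :: "(('j \<Rightarrow> real) \<times> real) set"
  assumes "finite J" "finite R"
    and "\<not> (\<exists>lam. \<forall>r\<in>R. (\<Sum>i\<in>J. fst r i * lam i) \<le> snd r)"
  shows "\<exists>y. (\<forall>r\<in>R. y r \<ge> 0) \<and> (\<forall>i\<in>J. (\<Sum>r\<in>R. y r * fst r i) = 0) \<and> (\<Sum>r\<in>R. y r * snd r) < 0"
  using assms
proof (induction J arbitrary: R rule: finite_induct)
  case empty
  then obtain r where r: "r \<in> R" "snd r < 0" by force
  have "(\<Sum>x\<in>R. (if x = r then 1 else 0) * snd x) = (\<Sum>x\<in>R. if x = r then snd x else 0)"
    by (rule sum.cong) auto
  also have "\<dots> = snd r" using r empty by (simp add: sum.delta')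
  finally show ?case using r
    by (intro exI[of _ "\<lambda>x. if x = r then 1 else 0"]) auto
next
  case (insert j J)
  note fin = \<open>finite R\<close>
  define Rz where "Rz = {r\<in>R. fst r j = 0}"
  define Rp where "Rp = {r\<in>R. fst r j > 0}"
  define Rn where "Rn = {r\<in>R. fst r j < 0}"
  define cmb :: "(('j \<Rightarrow> real) \<times> real) \<Rightarrow> (('j \<Rightarrow> real) \<times> real) \<Rightarrow> (('j \<Rightarrow> real) \<times> real)"
    where "cmb p n = (\<lambda>i. (- fst n j) * fst p i + fst p j * fst n i, (- fst n j) * snd p + fst p j * snd n)" for p n
  define D where "D = Inl ` Rz \<union> Inr ` (Rp \<times> Rn)"
  define f where "f = case_sum (\<lambda>r. r) (\<lambda>(p, n). cmb p n)"
  have finR: "finite Rz" "finite Rp" "finite Rn" using fin by (auto simp: Rz_def Rp_def Rn_def)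
  have finD: "finite D" using finR by (auto simp: D_def)
  have nf: "\<not> (\<exists>lam. \<forall>r\<in>f ` D. (\<Sum>i\<in>J. fst r i * lam i) \<le> snd r)"
  proof
    assume "\<exists>lam. \<forall>r\<in>f ` D. (\<Sum>i\<in>J. fst r i * lam i) \<le> snd r"
    then obtain lam where lam: "\<forall>r\<in>f ` D. (\<Sum>i\<in>J. fst r i * lam i) \<le> snd r" by blast
    define S where "S r = (\<Sum>i\<in>J. fst r i * lam i)" for r :: "('j \<Rightarrow> real) \<times> real"
    have z: "S r \<le> snd r" if "r \<in> Rz" for r
      using lam that unfolding S_def D_def f_def by force
    have c: "(- fst n j) * S p + fst p j * S n \<le> (- fst n j) * snd p + fst p j * snd n"
      if "p \<in> Rp" "n \<in> Rn" for p n
    proof -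
      have "cmb p n \<in> f ` D" using that unfolding D_def f_def by force
      then have "(\<Sum>i\<in>J. fst (cmb p n) i * lam i) \<le> snd (cmb p n)" using lam by blast
      moreover have "(\<Sum>i\<in>J. fst (cmb p n) i * lam i) = (- fst n j) * S p + fst p j * S n"
        unfolding cmb_def S_def by (simp add: sum.distrib[symmetric] sum_distrib_left sum_negf[symmetric] algebra_simps)
      ultimately show ?thesis unfolding cmb_def by simp
    qed
    have "\<exists>t. (\<forall>l\<in>(\<lambda>n. (snd n - S n) / fst n j) ` Rn. l \<le> t) \<and> (\<forall>v\<in>(\<lambda>p. (snd p - S p) / fst p j) ` Rp. t \<le> v)"
    proof (rule between_exists)
      show "\<forall>l\<in>(\<lambda>n. (snd n - S n) / fst n j) ` Rn. \<forall>v\<in>(\<lambda>p. (snd p - S p) / fst p j) ` Rp. l \<le> v"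
      proof (clarify)
        fix n p assume n: "n \<in> Rn" and p: "p \<in> Rp"
        have an: "fst n j < 0" and ap: "fst p j > 0" using n p by (auto simp: Rn_def Rp_def)
        have "0 \<le> (- fst n j) * (snd p - S p) + fst p j * (snd n - S n)" using c[OF p n] by (simp add: algebra_simps)
        then show "(snd n - S n) / fst n j \<le> (snd p - S p) / fst p j"
          using an ap by (simp add: field_simps)
      qed
    qed (use finR in auto)
    then obtain t where t: "(\<forall>l\<in>(\<lambda>n. (snd n - S n) / fst n j) ` Rn. l \<le> t) \<and> (\<forall>v\<in>(\<lambda>p. (snd p - S p) / fst p j) ` Rp. t \<le> v)"
      by (elim exE)
    have tl: "\<And>n. n \<in> Rn \<Longrightarrow> (snd n - S n) / fst n j \<le> t"
      and tu: "\<And>p. p \<in> Rp \<Longrightarrow> t \<le> (snd p - S p) / fst p j" using t by auto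
    have "\<forall>r\<in>R. (\<Sum>i\<in>insert j J. fst r i * (lam(j := t)) i) \<le> snd r"
    proof
      fix r assume r: "r \<in> R"
      have eq: "(\<Sum>i\<in>insert j J. fst r i * (lam(j := t)) i) = fst r j * t + S r"
        using insert.hyps unfolding S_def by (simp add: sum.insert) (rule sum.cong, auto)
      consider "fst r j = 0" | "fst r j > 0" | "fst r j < 0" by linarith
      then show "(\<Sum>i\<in>insert j J. fst r i * (lam(j := t)) i) \<le> snd r"
      proof cases
        case 1 then show ?thesis using z[of r] r eq by (simp add: Rz_def)
      next
        case 2 then have "t \<le> (snd r - S r) / fst r j" using tu[of r] r by (simp add: Rp_def)
        then show ?thesis using 2 eq by (simp add: field_simps)
      next
        case 3 then have "(snd r - S r) / fst r j \<le> t" using tl[of r] r by (simp add: Rn_def)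
        then show ?thesis using 3 eq by (simp add: field_simps)
      qed
    qed
    then show False using insert.prems(2) by blast
  qed
  obtain y' where y': "\<forall>r\<in>f ` D. y' r \<ge> 0" "\<forall>i\<in>J. (\<Sum>r\<in>f ` D. y' r * fst r i) = 0"
    "(\<Sum>r\<in>f ` D. y' r * snd r) < 0"
    using insert.IH[OF _ nf] finD by blast
  obtain z where z: "\<forall>x\<in>D. z x \<ge> 0" "\<And>h::('j \<Rightarrow> real) \<times> real \<Rightarrow> real. (\<Sum>x\<in>D. z x * h (f x)) = (\<Sum>r\<in>f ` D. y' r * h r)"
    using lift_coeffs[OF finD _ y'(1)] by blast
  define y where "y r = (if r \<in> Rz then z (Inl r) else 0)
     + (if r \<in> Rp then (\<Sum>n\<in>Rn. z (Inr (r, n)) * (- fst n j)) else 0)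
     + (if r \<in> Rn then (\<Sum>p\<in>Rp. z (Inr (p, r)) * fst p j) else 0)" for r
  have key: "(\<Sum>r\<in>R. y r * \<phi> r) = (\<Sum>x\<in>D. z x * \<phi> (f x))"
    if phi: "\<And>p n. \<phi> (cmb p n) = (- fst n j) * \<phi> p + fst p j * \<phi> n" for \<phi>
  proof -
    have sub: "Rz \<subseteq> R" "Rp \<subseteq> R" "Rn \<subseteq> R" by (auto simp: Rz_def Rp_def Rn_def)
    have "(\<Sum>r\<in>R. y r * \<phi> r) = (\<Sum>r\<in>R. (if r \<in> Rz then z (Inl r) * \<phi> r else 0))
       + (\<Sum>r\<in>R. (if r \<in> Rp then (\<Sum>n\<in>Rn. z (Inr (r, n)) * (- fst n j)) * \<phi> r else 0))
       + (\<Sum>r\<in>R. (if r \<in> Rn then (\<Sum>p\<in>Rp. z (Inr (p, r)) * fst p j) * \<phi> r else 0))"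
      unfolding y_def sum.distrib[symmetric] by (rule sum.cong) (auto simp: algebra_simps)
    also have "\<dots> = (\<Sum>r\<in>Rz. z (Inl r) * \<phi> r) + (\<Sum>p\<in>Rp. (\<Sum>n\<in>Rn. z (Inr (p, n)) * (- fst n j)) * \<phi> p)
       + (\<Sum>n\<in>Rn. (\<Sum>p\<in>Rp. z (Inr (p, n)) * fst p j) * \<phi> n)"
      using sub fin by (simp add: sum.inter_restrict[symmetric] Int_absorb1 Int_absorb2)
    also have "\<dots> = (\<Sum>r\<in>Rz. z (Inl r) * \<phi> r) + (\<Sum>p\<in>Rp. \<Sum>n\<in>Rn. z (Inr (p, n)) * ((- fst n j) * \<phi> p + fst p j * \<phi> n))"
    proof -
      have "(\<Sum>n\<in>Rn. (\<Sum>p\<in>Rp. z (Inr (p, n)) * fst p j) * \<phi> n) = (\<Sum>p\<in>Rp. \<Sum>n\<in>Rn. z (Inr (p, n)) * (fst p j * \<phi> n))"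
        by (subst sum.swap) (simp add: sum_distrib_right mult.assoc)
      moreover have "(\<Sum>p\<in>Rp. (\<Sum>n\<in>Rn. z (Inr (p, n)) * (- fst n j)) * \<phi> p) = (\<Sum>p\<in>Rp. \<Sum>n\<in>Rn. z (Inr (p, n)) * ((- fst n j) * \<phi> p))"
        by (simp add: sum_distrib_right mult.assoc)
      ultimately show ?thesis unfolding distrib_left sum.distrib by simp
    qed
    also have "\<dots> = (\<Sum>x\<in>D. z x * \<phi> (f x))"
    proof -
      have "(\<Sum>x\<in>D. z x * \<phi> (f x)) = (\<Sum>x\<in>Inl ` Rz. z x * \<phi> (f x)) + (\<Sum>x\<in>Inr ` (Rp \<times> Rn). z x * \<phi> (f x))"
        unfolding D_def using finR by (intro sum.union_disjoint) auto
      also have "\<dots> = (\<Sum>r\<in>Rz. z (Inl r) * \<phi> r) + (\<Sum>pn\<in>Rp \<times> Rn. z (Inr pn) * \<phi> (f (Inr pn)))"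
        by (simp add: sum.reindex f_def)
      also have "\<dots> = (\<Sum>r\<in>Rz. z (Inl r) * \<phi> r) + (\<Sum>p\<in>Rp. \<Sum>n\<in>Rn. z (Inr (p, n)) * ((- fst n j) * \<phi> p + fst p j * \<phi> n))"
        by (simp add: sum.cartesian_product f_def phi split_def)
      finally show ?thesis by (rule sym)
    qed
    finally show ?thesis .
  qed
  show ?case
  proof (intro exI[of _ y] conjI ballI)
    fix r assume "r \<in> R"
    have zD: "z (Inr (p, n)) \<ge> 0" if "p \<in> Rp" "n \<in> Rn" for p n using z(1) that by (auto simp: D_def)
    have zZ: "z (Inl q) \<ge> 0" if "q \<in> Rz" for q using z(1) that by (auto simp: D_def)
    have a1: "0 \<le> z (Inr (p, n)) * (- fst n j)" if "p \<in> Rp" "n \<in> Rn" for p n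
      using zD[OF that] that by (intro mult_nonneg_nonneg) (auto simp: Rn_def)
    have a2: "0 \<le> z (Inr (p, n)) * fst p j" if "p \<in> Rp" "n \<in> Rn" for p n
      using zD[OF that] that by (intro mult_nonneg_nonneg) (auto simp: Rp_def)
    show "0 \<le> y r" unfolding y_def
      by (intro add_nonneg_nonneg) (auto simp del: mult_minus_right intro!: sum_nonneg a1 a2 zZ)
  next
    fix i assume i: "i \<in> insert j J"
    have "(\<Sum>r\<in>R. y r * fst r i) = (\<Sum>x\<in>D. z x * fst (f x) i)"
      by (rule key) (simp add: cmb_def)
    also have "\<dots> = 0"
    proof (cases "i = j")
      case True
      have "fst (f x) j = 0" if "x \<in> D" for x
        using that by (auto simp: D_def f_def cmb_def Rz_def)
      then show ?thesis using True by simp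
    next
      case False
      then have "i \<in> J" using i by simp
      have "(\<Sum>x\<in>D. z x * fst (f x) i) = (\<Sum>r\<in>f ` D. y' r * fst r i)" by (rule z(2))
      also have "\<dots> = 0" using y'(2) \<open>i \<in> J\<close> by blast
      finally show ?thesis .
    qed
    finally show "(\<Sum>r\<in>R. y r * fst r i) = 0" .
  next
    have "(\<Sum>r\<in>R. y r * snd r) = (\<Sum>x\<in>D. z x * snd (f x))"
      by (rule key) (simp add: cmb_def)
    also have "\<dots> = (\<Sum>r\<in>f ` D. y' r * snd r)" by (rule z(2))
    finally show "(\<Sum>r\<in>R. y r * snd r) < 0" using y'(3) by linarith
  qed
qed

lemma farkas_idx:
  fixes a :: "'k \<Rightarrow> 'j \<Rightarrow> real" and b :: "'k \<Rightarrow> real"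
  assumes "finite J" "finite K" "\<not> (\<exists>lam. \<forall>k\<in>K. (\<Sum>j\<in>J. a k j * lam j) \<le> b k)"
  shows "\<exists>y. (\<forall>k\<in>K. y k \<ge> 0) \<and> (\<forall>j\<in>J. (\<Sum>k\<in>K. y k * a k j) = 0) \<and> (\<Sum>k\<in>K. y k * b k) < 0"
proof -
  define f where "f k = (a k, b k)" for k
  have "\<not> (\<exists>lam. \<forall>r\<in>f ` K. (\<Sum>i\<in>J. fst r i * lam i) \<le> snd r)" using assms(3) by (auto simp: f_def)
  from farkas_rows[OF assms(1) finite_imageI[OF assms(2)] this]
  obtain y where y: "\<forall>r\<in>f ` K. y r \<ge> 0" "\<forall>i\<in>J. (\<Sum>r\<in>f ` K. y r * fst r i) = 0"
    "(\<Sum>r\<in>f ` K. y r * snd r) < 0"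
    by (elim exE conjE)
  obtain z where z: "\<forall>x\<in>K. z x \<ge> 0" "\<And>h::('j \<Rightarrow> real) \<times> real \<Rightarrow> real. (\<Sum>x\<in>K. z x * h (f x)) = (\<Sum>r\<in>f ` K. y r * h r)"
    using lift_coeffs[OF assms(2) subset_refl y(1)] by blast
  show ?thesis
  proof (intro exI[of _ z] conjI ballI)
    show "0 \<le> z k" if "k \<in> K" for k using z(1) that by blast
    fix j assume j: "j \<in> J"
    have "(\<Sum>k\<in>K. z k * a k j) = (\<Sum>r\<in>f ` K. y r * fst r j)" using z(2)[of "\<lambda>r. fst r j"] by (simp add: f_def)
    also have "\<dots> = 0" using y(2) j by blast
    finally show "(\<Sum>k\<in>K. z k * a k j) = 0" .
  next
    have "(\<Sum>k\<in>K. z k * b k) = (\<Sum>r\<in>f ` K. y r * snd r)" using z(2)[of snd] by (simp add: f_def)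
    then show "(\<Sum>k\<in>K. z k * b k) < 0" using y(3) by linarith
  qed
qed

lemma finite_paths:
  assumes "finite V" "E \<subseteq> V \<times> V" "v \<in> V"
  shows "finite (paths E v w)"
proof -
  have "paths E v w \<subseteq> {xs. set xs \<subseteq> V \<and> length xs \<le> card V}"
  proof
    fix p assume "p \<in> paths E v w"
    then have p: "p \<noteq> []" "hd p = v" "distinct p" "\<forall>k. Suc k < length p \<longrightarrow> (p ! k, p ! Suc k) \<in> E"
      by (auto simp: paths_def simple_path_def)
    have "set p \<subseteq> V"
    proof
      fix x assume "x \<in> set p"
      then obtain k where k: "k < length p" "p ! k = x" by (auto simp: in_set_conv_nth)
      show "x \<in> V"
      proof (cases k)
        case 0 then show ?thesis using k p assms(3) by (simp add: hd_conv_nth)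
      next
        case (Suc k')
        then have "(p ! k', p ! k) \<in> E" using p(4) k(1) by blast
        then have "(p ! k', p ! k) \<in> V \<times> V" using assms(2) by blast
        then show ?thesis using k(2) by simp
      qed
    qed
    moreover have "length p \<le> card V"
    proof -
      have "length p = card (set p)" using distinct_card[OF p(3)] by simp
      also have "\<dots> \<le> card V" by (rule card_mono[OF assms(1) \<open>set p \<subseteq> V\<close>])
      finally show ?thesis .
    qed
    ultimately show "p \<in> {xs. set xs \<subseteq> V \<and> length xs \<le> card V}" by blast
  qed
  then show ?thesis using finite_lists_length_le[OF assms(1)] by (rule finite_subset)
qed

lemma sum_Inl_Inr:
  assumes "finite T" "finite J"
  shows "(\<Sum>k\<in>Inl ` T \<union> Inr ` J. F k) = (\<Sum>t\<in>T. F (Inl t)) + (\<Sum>j\<in>J. F (Inr j))"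
proof -
  have "(\<Sum>k\<in>Inl ` T \<union> Inr ` J. F k) = (\<Sum>k\<in>Inl ` T. F k) + (\<Sum>k\<in>Inr ` J. F k)"
    using assms by (intro sum.union_disjoint) auto
  also have "\<dots> = (\<Sum>t\<in>T. F (Inl t)) + (\<Sum>j\<in>J. F (Inr j))"
    by (simp add: sum.reindex)
  finally show ?thesis .
qed

lemma delta_identity:
  fixes v :: "'i \<times> 'p \<times> 'p \<Rightarrow> real" and h :: "'i \<times> 'p \<Rightarrow> real"
  assumes "finite A" "finite T" "\<And>i p q. (i, p, q) \<in> T \<Longrightarrow> (i, p) \<in> A \<and> (i, q) \<in> A"
  shows "(\<Sum>x\<in>A. h x * (\<Sum>t\<in>T. v t * (case t of (i, p, q) \<Rightarrow>
            (if x = (i, q) then 1 else 0) - (if x = (i, p) then 1 else 0))))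
       = (\<Sum>t\<in>T. v t * (case t of (i, p, q) \<Rightarrow> h (i, q) - h (i, p)))"
proof -
  have "(\<Sum>x\<in>A. h x * (\<Sum>t\<in>T. v t * (case t of (i, p, q) \<Rightarrow>
            (if x = (i, q) then 1 else 0) - (if x = (i, p) then 1 else 0))))
      = (\<Sum>t\<in>T. \<Sum>x\<in>A. v t * (h x * (case t of (i, p, q) \<Rightarrow>
            (if x = (i, q) then 1 else 0) - (if x = (i, p) then 1 else 0))))"
    by (subst sum.swap) (simp add: sum_distrib_left mult_ac)
  also have "\<dots> = (\<Sum>t\<in>T. v t * (case t of (i, p, q) \<Rightarrow> h (i, q) - h (i, p)))"
  proof (rule sum.cong[OF refl])
    fix t assume t: "t \<in> T"
    obtain i p q where tt: "t = (i, p, q)" by (cases t) auto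
    have A: "(i, p) \<in> A" "(i, q) \<in> A" using assms(3) t tt by auto
    have "(\<Sum>x\<in>A. h x * ((if x = (i, q) then 1 else 0) - (if x = (i, p) then 1 else 0)))
        = (\<Sum>x\<in>A. (if x = (i, q) then h x else 0)) - (\<Sum>x\<in>A. (if x = (i, p) then h x else 0))"
      by (subst sum_subtractf[symmetric]) (rule sum.cong, auto)
    also have "\<dots> = h (i, q) - h (i, p)" using A assms(1) by (simp add: sum.delta')
    finally show "(\<Sum>x\<in>A. v t * (h x * (case t of (i, p, q) \<Rightarrow>
            (if x = (i, q) then 1 else 0) - (if x = (i, p) then 1 else 0))))
        = v t * (case t of (i, p, q) \<Rightarrow> h (i, q) - h (i, p))"
      unfolding tt by (simp add: sum_distrib_left[symmetric])
  qed
  finally show ?thesis .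
qed


lemma easy_direction:
  fixes I :: "'i set" and J :: "'j set"
    and tau :: "'i \<times> 'v list \<Rightarrow> ('i \<times> 'v list \<Rightarrow> real) \<Rightarrow> real"
    and g :: "'i \<times> 'v list \<Rightarrow> 'j \<Rightarrow> ('i \<times> 'v list \<Rightarrow> real) \<Rightarrow> real"
    and u :: "'i \<times> 'v list \<Rightarrow> real"
  assumes finP: "\<And>i. i \<in> I \<Longrightarrow> finite (paths E (s i) (t i))"
    and "finite I" "\<forall>i \<in> I. d i > 0" "finite J"
    and lam: "\<forall>j\<in>J. lam j \<ge> 0" and W: "wardrop I E s t d J tau g lam u"
  shows "lp_optimal I E s t d J tau g u"
proof -
  define P where "P = Pset I E s t"
  define pth where "pth i = paths E (s i) (t i)" for i
  have PS: "P = Sigma I pth" by (auto simp: P_def Pset_def pth_def)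
  have finPP: "finite P" unfolding PS using assms(2) finP by (auto simp: pth_def)
  have sumP: "(\<Sum>ip\<in>P. F ip) = (\<Sum>i\<in>I. \<Sum>p\<in>pth i. F (i, p))" for F :: "_ \<Rightarrow> real"
    unfolding PS using assms(2) finP by (subst sum.Sigma) (auto simp: pth_def)
  have fu: "feasible I E s t d u" using W by (simp add: wardrop_def)
  define c where "c ip = cost J tau g lam ip u" for ip
  have war: "c (i, p) \<le> c (i, q)" if "i \<in> I" "p \<in> pth i" "q \<in> pth i" "u (i, p) > 0" for i p q
    using W that by (auto simp: wardrop_def c_def pth_def)
  have lin: "(\<Sum>ip\<in>P. c ip * y ip) = (\<Sum>ip\<in>P. tau ip u * y ip) + (\<Sum>j\<in>J. lam j * (\<Sum>ip\<in>P. g ip j u * y ip))"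
    for y :: "'i \<times> 'v list \<Rightarrow> real"
  proof -
    have "(\<Sum>ip\<in>P. c ip * y ip) = (\<Sum>ip\<in>P. tau ip u * y ip + (\<Sum>j\<in>J. lam j * (g ip j u * y ip)))"
      by (rule sum.cong) (simp_all add: c_def cost_def distrib_left sum_distrib_left mult_ac)
    also have "\<dots> = (\<Sum>ip\<in>P. tau ip u * y ip) + (\<Sum>j\<in>J. \<Sum>ip\<in>P. lam j * (g ip j u * y ip))"
      by (simp add: sum.distrib sum.swap[of _ J P])
    also have "\<dots> = (\<Sum>ip\<in>P. tau ip u * y ip) + (\<Sum>j\<in>J. lam j * (\<Sum>ip\<in>P. g ip j u * y ip))"
      by (simp add: sum_distrib_left)
    finally show ?thesis .
  qed
  have uadm: "feasible I E s t d u \<and> (\<forall>j\<in>J. (\<Sum>ip\<in>P. g ip j u * u ip) \<le> Gext P g j u)"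
    using fu by (simp add: Gext_def)
  have opt: "(\<Sum>ip\<in>P. tau ip u * u ip) \<le> (\<Sum>ip\<in>P. tau ip u * x ip)"
    if fx: "feasible I E s t d x" and cx: "\<forall>j\<in>J. (\<Sum>ip\<in>P. g ip j u * x ip) \<le> Gext P g j u" for x
  proof -
    have per: "(\<Sum>p\<in>pth i. c (i, p) * u (i, p)) \<le> (\<Sum>p\<in>pth i. c (i, p) * x (i, p))" if i: "i \<in> I" for i
    proof -
      have un: "u (i, p) \<ge> 0" if "p \<in> pth i" for p
        using fu i that by (auto simp: feasible_def Pset_def pth_def)
      have xn: "x (i, p) \<ge> 0" if "p \<in> pth i" for p
        using fx i that by (auto simp: feasible_def Pset_def pth_def)
      have du: "(\<Sum>p\<in>pth i. u (i, p)) = d i" using fu i by (simp add: feasible_def pth_def)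
      have dx: "(\<Sum>p\<in>pth i. x (i, p)) = d i" using fx i by (simp add: feasible_def pth_def)
      obtain p0 where p0: "p0 \<in> pth i" "u (i, p0) > 0"
      proof (rule ccontr)
        assume "\<not> thesis"
        then have "\<forall>p\<in>pth i. u (i, p) \<le> 0" using that by force
        then have "(\<Sum>p\<in>pth i. u (i, p)) \<le> 0" by (simp add: sum_nonpos)
        then show False using du assms(3) i by auto
      qed
      define m where "m = c (i, p0)"
      have "(\<Sum>p\<in>pth i. c (i, p) * u (i, p)) = (\<Sum>p\<in>pth i. m * u (i, p))"
      proof (rule sum.cong[OF refl])
        fix p assume p: "p \<in> pth i"
        show "c (i, p) * u (i, p) = m * u (i, p)"
        proof (cases "u (i, p) > 0")
          case True
          then have "c (i, p) = m" using war[OF i p p0(1) True] war[OF i p0(1) p p0(2)] by (simp add: m_def)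
          then show ?thesis by simp
        next
          case False then have "u (i, p) = 0" using un[OF p] by simp
          then show ?thesis by simp
        qed
      qed
      also have "\<dots> = m * d i" by (simp add: sum_distrib_left[symmetric] du)
      also have "\<dots> = (\<Sum>p\<in>pth i. m * x (i, p))" by (simp add: sum_distrib_left[symmetric] dx)
      also have "\<dots> \<le> (\<Sum>p\<in>pth i. c (i, p) * x (i, p))"
      proof (rule sum_mono)
        fix q assume q: "q \<in> pth i"
        show "m * x (i, q) \<le> c (i, q) * x (i, q)"
          using war[OF i p0(1) q p0(2)] xn[OF q] by (simp add: m_def mult_right_mono)
      qed
      finally show ?thesis .
    qed
    have "(\<Sum>ip\<in>P. c ip * u ip) \<le> (\<Sum>ip\<in>P. c ip * x ip)"
      unfolding sumP by (rule sum_mono) (rule per)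
    moreover have "(\<Sum>j\<in>J. lam j * (\<Sum>ip\<in>P. g ip j u * x ip)) \<le> (\<Sum>j\<in>J. lam j * (\<Sum>ip\<in>P. g ip j u * u ip))"
      by (rule sum_mono) (use lam cx in \<open>auto simp: Gext_def intro: mult_left_mono\<close>)
    ultimately show ?thesis unfolding lin by linarith
  qed
  show ?thesis
    unfolding lp_optimal_def Let_def P_def[symmetric] using uadm opt by blast
qed


lemma hard_direction:
  fixes I :: "'i set" and J :: "'j set"
    and tau :: "'i \<times> 'v list \<Rightarrow> ('i \<times> 'v list \<Rightarrow> real) \<Rightarrow> real"
    and g :: "'i \<times> 'v list \<Rightarrow> 'j \<Rightarrow> ('i \<times> 'v list \<Rightarrow> real) \<Rightarrow> real"
    and u :: "'i \<times> 'v list \<Rightarrow> real"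
  assumes finP: "\<And>i. i \<in> I \<Longrightarrow> finite (paths E (s i) (t i))"
    and finI: "finite I" and finJ: "finite J"
    and fu: "feasible I E s t d u" and LP: "lp_optimal I E s t d J tau g u"
  shows "implementable I E s t d J tau g u"
proof (rule ccontr)
  assume nimp: "\<not> implementable I E s t d J tau g u"
  define P where "P = Pset I E s t"
  define pth where "pth i = paths E (s i) (t i)" for i
  have PS: "P = Sigma I pth" by (auto simp: P_def Pset_def pth_def)
  have finPP: "finite P" unfolding PS using finI finP by (auto simp: pth_def)
  have sumP: "(\<Sum>ip\<in>P. F ip) = (\<Sum>i\<in>I. \<Sum>p\<in>pth i. F (i, p))" for F :: "_ \<Rightarrow> real"
    unfolding PS using finI finP by (subst sum.Sigma) (auto simp: pth_def)
  have u0: "u ip \<ge> 0" if "ip \<in> P" for ip using fu that by (auto simp: feasible_def P_def)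
  have uout: "u ip = 0" if "ip \<notin> P" for ip using fu that unfolding feasible_def P_def by blast
  define T where "T = {(i, p, q). i \<in> I \<and> p \<in> pth i \<and> q \<in> pth i \<and> u (i, p) > 0}"
  have finT: "finite T"
  proof (rule finite_subset)
    show "T \<subseteq> (\<lambda>(i, p, q). (i, p, q)) ` (SIGMA i:I. pth i \<times> pth i)" by (auto simp: T_def)
    show "finite ((\<lambda>(i, p, q). (i, p, q)) ` (SIGMA i:I. pth i \<times> pth i))"
      using finI finP by (auto simp: pth_def)
  qed
  have TP: "(i, p) \<in> P \<and> (i, q) \<in> P" if "(i, p, q) \<in> T" for i p q using that by (auto simp: T_def PS)
  define K where "K = Inl ` T \<union> Inr ` J"
  define a :: "('i \<times> 'v list \<times> 'v list) + 'j \<Rightarrow> 'j \<Rightarrow> real" where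
    "a = case_sum (\<lambda>(i, p, q) j. g (i, p) j u - g (i, q) j u) (\<lambda>j0 j. if j = j0 then -1 else 0)"
  define b :: "('i \<times> 'v list \<times> 'v list) + 'j \<Rightarrow> real" where
    "b = case_sum (\<lambda>(i, p, q). tau (i, q) u - tau (i, p) u) (\<lambda>j0. 0)"
  have finK: "finite K" using finT finJ by (simp add: K_def)
  have nf: "\<not> (\<exists>lam. \<forall>k\<in>K. (\<Sum>j\<in>J. a k j * lam j) \<le> b k)"
  proof
    assume "\<exists>lam. \<forall>k\<in>K. (\<Sum>j\<in>J. a k j * lam j) \<le> b k"
    then obtain lam where lam: "\<forall>k\<in>K. (\<Sum>j\<in>J. a k j * lam j) \<le> b k" by blast
    have nn: "lam j0 \<ge> 0" if j0: "j0 \<in> J" for j0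
    proof -
      have "(\<Sum>j\<in>J. a (Inr j0) j * lam j) \<le> b (Inr j0)" using lam j0 by (auto simp: K_def)
      moreover have "(\<Sum>j\<in>J. a (Inr j0) j * lam j) = (\<Sum>j\<in>J. if j = j0 then - lam j else 0)"
        by (rule sum.cong) (auto simp: a_def)
      moreover have "(\<Sum>j\<in>J. if j = j0 then - lam j else 0) = - lam j0" using j0 finJ by (simp add: sum.delta')
      ultimately show ?thesis by (simp add: b_def)
    qed
    have "wardrop I E s t d J tau g lam u"
      unfolding wardrop_def
    proof (intro conjI fu ballI impI)
      fix i p q assume i: "i \<in> I" and p: "p \<in> paths E (s i) (t i)" and up: "0 < u (i, p)"
        and q: "q \<in> paths E (s i) (t i)"
      have "(i, p, q) \<in> T" using i p q up by (simp add: T_def pth_def)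
      then have "(\<Sum>j\<in>J. a (Inl (i, p, q)) j * lam j) \<le> b (Inl (i, p, q))" using lam by (auto simp: K_def)
      then have "(\<Sum>j\<in>J. (g (i, p) j u - g (i, q) j u) * lam j) \<le> tau (i, q) u - tau (i, p) u"
        by (simp add: a_def b_def)
      then have "(\<Sum>j\<in>J. lam j * g (i, p) j u) - (\<Sum>j\<in>J. lam j * g (i, q) j u) \<le> tau (i, q) u - tau (i, p) u"
        by (simp add: sum_subtractf[symmetric] algebra_simps)
      then show "cost J tau g lam (i, p) u \<le> cost J tau g lam (i, q) u" by (simp add: cost_def)
    qed
    then show False using nimp nn by (auto simp: implementable_def)
  qed
  from farkas_idx[OF finJ finK nf] obtain y where y: "\<forall>k\<in>K. y k \<ge> 0"
    "\<forall>j\<in>J. (\<Sum>k\<in>K. y k * a k j) = 0" "(\<Sum>k\<in>K. y k * b k) < 0" by (elim exE conjE)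
  define v where "v tt = y (Inl tt)" for tt
  have v0: "v tt \<ge> 0" if "tt \<in> T" for tt using y(1) that by (auto simp: v_def K_def)
  have w0: "y (Inr j) \<ge> 0" if "j \<in> J" for j using y(1) that by (auto simp: K_def)
  have gcon: "(\<Sum>tt\<in>T. v tt * (case tt of (i, p, q) \<Rightarrow> g (i, q) j u - g (i, p) j u)) \<le> 0" if j: "j \<in> J" for j
  proof -
    have "0 = (\<Sum>k\<in>K. y k * a k j)" using y(2) j by simp
    also have "\<dots> = (\<Sum>tt\<in>T. v tt * (case tt of (i, p, q) \<Rightarrow> g (i, p) j u - g (i, q) j u))
        + (\<Sum>j0\<in>J. y (Inr j0) * (if j = j0 then -1 else 0))"
      unfolding K_def sum_Inl_Inr[OF finT finJ] by (simp add: a_def v_def split_def)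
    also have "(\<Sum>j0\<in>J. y (Inr j0) * (if j = j0 then -1 else 0)) = (\<Sum>j0\<in>J. if j = j0 then - y (Inr j0) else 0)"
      by (rule sum.cong) auto
    also have "\<dots> = - y (Inr j)" using j finJ by (simp add: sum.delta)
    finally have "(\<Sum>tt\<in>T. v tt * (case tt of (i, p, q) \<Rightarrow> g (i, p) j u - g (i, q) j u)) = y (Inr j)" by simp
    moreover have "(\<Sum>tt\<in>T. v tt * (case tt of (i, p, q) \<Rightarrow> g (i, q) j u - g (i, p) j u))
        = - (\<Sum>tt\<in>T. v tt * (case tt of (i, p, q) \<Rightarrow> g (i, p) j u - g (i, q) j u))"
      by (subst sum_negf[symmetric]) (rule sum.cong, auto simp: split_def algebra_simps)
    ultimately show ?thesis using w0[OF j] by simp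
  qed
  have tcon: "(\<Sum>tt\<in>T. v tt * (case tt of (i, p, q) \<Rightarrow> tau (i, q) u - tau (i, p) u)) < 0"
  proof -
    have "(\<Sum>k\<in>K. y k * b k) = (\<Sum>tt\<in>T. v tt * (case tt of (i, p, q) \<Rightarrow> tau (i, q) u - tau (i, p) u))"
      unfolding K_def sum_Inl_Inr[OF finT finJ] by (simp add: b_def v_def split_def)
    then show ?thesis using y(3) by simp
  qed
  have Tne: "T \<noteq> {}" using tcon by auto
  then obtain i0 p0 q0 where t0: "(i0, p0, q0) \<in> T" by auto
  define Upos where "Upos = {ip\<in>P. u ip > 0}"
  have Upos_ne: "u ` Upos \<noteq> {}" using t0 TP[OF t0] by (auto simp: Upos_def T_def)
  have finU: "finite (u ` Upos)" using finPP by (simp add: Upos_def)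
  define m where "m = Min (u ` Upos)"
  have m_pos: "m > 0" using Min_in[OF finU Upos_ne] by (auto simp: m_def Upos_def)
  have m_le: "m \<le> u ip" if "ip \<in> P" "u ip > 0" for ip
    using Min_le[OF finU] that by (auto simp: m_def Upos_def)
  define Y where "Y = (\<Sum>tt\<in>T. v tt)"
  have Y0: "Y \<ge> 0" unfolding Y_def using v0 by (simp add: sum_nonneg)
  define eps where "eps = m / (Y + 1)"
  have eps_pos: "eps > 0" using m_pos Y0 by (simp add: eps_def)
  have epsY: "eps * Y \<le> m"
  proof -
    have "eps * Y = m * (Y / (Y + 1))" by (simp add: eps_def)
    also have "\<dots> \<le> m * 1" using m_pos Y0 by (intro mult_left_mono) auto
    finally show ?thesis by simp
  qed
  define B :: "'i \<times> 'v list \<Rightarrow> 'i \<times> 'v list \<times> 'v list \<Rightarrow> real" where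
    "B = (\<lambda>ip tt. case tt of (i, p, q) \<Rightarrow> (if ip = (i, q) then 1 else 0) - (if ip = (i, p) then 1 else 0))"
  define \<delta> where "\<delta> ip = (\<Sum>tt\<in>T. v tt * B ip tt)" for ip
  have ident: "(\<Sum>ip\<in>P. h ip * \<delta> ip) = (\<Sum>tt\<in>T. v tt * (case tt of (i, p, q) \<Rightarrow> h (i, q) - h (i, p)))" for h
    unfolding \<delta>_def using delta_identity[OF finPP finT TP, of h v] by (simp add: B_def)
  have dlow: "\<delta> ip \<ge> - Y" for ip
  proof -
    have "- Y = (\<Sum>tt\<in>T. v tt * (-1))" by (simp add: Y_def sum_negf)
    also have "\<dots> \<le> \<delta> ip" unfolding \<delta>_def
      by (rule sum_mono, rule mult_left_mono) (auto simp: B_def v0 split: prod.splits)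
    finally show ?thesis .
  qed
  have dzero: "\<delta> ip \<ge> 0" if "\<not> u ip > 0" for ip
    unfolding \<delta>_def
  proof (rule sum_nonneg)
    fix tt assume tt: "tt \<in> T"
    obtain i p q where tq: "tt = (i, p, q)" by (cases tt) auto
    have "ip \<noteq> (i, p)" using tt that unfolding tq by (auto simp: T_def)
    then have "B ip tt \<ge> 0" by (simp add: B_def tq)
    then show "0 \<le> v tt * B ip tt" using v0[OF tt] by simp
  qed
  have dout: "\<delta> ip = 0" if "ip \<notin> P" for ip
    unfolding \<delta>_def
  proof (rule sum.neutral, rule ballI)
    fix tt assume tt: "tt \<in> T"
    obtain i p q where tq: "tt = (i, p, q)" by (cases tt) auto
    have "ip \<noteq> (i, p)" "ip \<noteq> (i, q)" using TP[of i p q] tt that unfolding tq by auto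
    then show "v tt * B ip tt = 0" by (simp add: B_def tq)
  qed
  define x where "x ip = u ip + eps * \<delta> ip" for ip
  have xsum: "(\<Sum>ip\<in>P. h ip * x ip) = (\<Sum>ip\<in>P. h ip * u ip) + eps * (\<Sum>ip\<in>P. h ip * \<delta> ip)" for h
    by (simp add: x_def distrib_left sum.distrib sum_distrib_left mult_ac)
  have fx: "feasible I E s t d x"
    unfolding feasible_def P_def[symmetric]
  proof (intro conjI ballI allI impI)
    fix ip assume ip: "ip \<in> P"
    show "0 \<le> x ip"
    proof (cases "u ip > 0")
      case True
      have "eps * (- Y) \<le> eps * \<delta> ip" using dlow eps_pos by (intro mult_left_mono) auto
      then show ?thesis using m_le[OF ip True] epsY by (simp add: x_def)
    next
      case False
      then show ?thesis using u0[OF ip] dzero[OF False] eps_pos by (simp add: x_def)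
    qed
  next
    fix ip assume "ip \<notin> P"
    then show "x ip = 0" using uout dout by (simp add: x_def)
  next
    fix i assume i: "i \<in> I"
    define h where "h ip = (if fst ip = i then 1 else 0 :: real)" for ip :: "'i \<times> 'v list"
    have "(\<Sum>ip\<in>P. h ip * \<delta> ip) = 0" unfolding ident by (simp add: h_def split_def)
    moreover have "(\<Sum>ip\<in>P. h ip * \<delta> ip) = (\<Sum>p\<in>pth i. \<delta> (i, p))"
    proof -
      have "(\<Sum>ip\<in>P. h ip * \<delta> ip) = (\<Sum>i'\<in>I. if i' = i then (\<Sum>p\<in>pth i'. \<delta> (i', p)) else 0)"
        unfolding sumP by (rule sum.cong) (auto simp: h_def)
      also have "\<dots> = (\<Sum>p\<in>pth i. \<delta> (i, p))" using i finI by (simp add: sum.delta')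
      finally show ?thesis .
    qed
    moreover have "(\<Sum>p\<in>pth i. u (i, p)) = d i" using fu i by (simp add: feasible_def pth_def)
    ultimately have "(\<Sum>p\<in>pth i. x (i, p)) = d i"
      by (simp add: x_def sum.distrib sum_distrib_left[symmetric])
    then show "(\<Sum>p\<in>paths E (s i) (t i). x (i, p)) = d i" by (simp add: pth_def)
  qed
  have cx: "\<forall>j\<in>J. (\<Sum>ip\<in>P. g ip j u * x ip) \<le> Gext P g j u"
  proof
    fix j assume j: "j \<in> J"
    have "(\<Sum>ip\<in>P. g ip j u * x ip) = Gext P g j u + eps * (\<Sum>tt\<in>T. v tt * (case tt of (i, p, q) \<Rightarrow> g (i, q) j u - g (i, p) j u))"
      unfolding xsum ident by (simp add: Gext_def split_def)
    moreover have "eps * (\<Sum>tt\<in>T. v tt * (case tt of (i, p, q) \<Rightarrow> g (i, q) j u - g (i, p) j u)) \<le> 0"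
      using gcon[OF j] eps_pos by (simp add: mult_nonneg_nonpos)
    ultimately show "(\<Sum>ip\<in>P. g ip j u * x ip) \<le> Gext P g j u" by simp
  qed
  have "(\<Sum>ip\<in>P. tau ip u * x ip) = (\<Sum>ip\<in>P. tau ip u * u ip) + eps * (\<Sum>tt\<in>T. v tt * (case tt of (i, p, q) \<Rightarrow> tau (i, q) u - tau (i, p) u))"
    unfolding xsum ident by (simp add: split_def)
  moreover have "eps * (\<Sum>tt\<in>T. v tt * (case tt of (i, p, q) \<Rightarrow> tau (i, q) u - tau (i, p) u)) < 0"
    using tcon eps_pos by (simp add: mult_pos_neg)
  moreover have "(\<Sum>ip\<in>P. tau ip u * u ip) \<le> (\<Sum>ip\<in>P. tau ip u * x ip)"
    using LP fx cx unfolding lp_optimal_def Let_def P_def[symmetric] by blast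
  ultimately show False by simp
qed

theorem theorem3p2:
  fixes V :: "'v set" and E :: "('v \<times> 'v) set"
    and I :: "'i set" and s t :: "'i \<Rightarrow> 'v" and d :: "'i \<Rightarrow> real"
    and J :: "'j set"
    and tau :: "'i \<times> 'v list \<Rightarrow> ('i \<times> 'v list \<Rightarrow> real) \<Rightarrow> real"
    and g :: "'i \<times> 'v list \<Rightarrow> 'j \<Rightarrow> ('i \<times> 'v list \<Rightarrow> real) \<Rightarrow> real"
    and u :: "'i \<times> 'v list \<Rightarrow> real"
  assumes "finite V" and "E \<subseteq> V \<times> V"
    and "finite I" and "\<forall>i \<in> I. s i \<in> V \<and> t i \<in> V" and "\<forall>i \<in> I. d i > 0"
    and "finite J"
    and "\<forall>x. feasible I E s t d x \<longrightarrow> (\<forall>ip \<in> Pset I E s t. \<forall>j \<in> J. g ip j x \<ge> 0)"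
    and "feasible I E s t d u"
  shows "implementable I E s t d J tau g u \<longleftrightarrow> lp_optimal I E s t d J tau g u"
proof
  have finP: "\<And>i. i \<in> I \<Longrightarrow> finite (paths E (s i) (t i))"
    using finite_paths[OF assms(1) assms(2)] assms(4) by blast
  assume "implementable I E s t d J tau g u"
  then obtain lam where "\<forall>j\<in>J. lam j \<ge> 0" "wardrop I E s t d J tau g lam u"
    by (auto simp: implementable_def)
  then show "lp_optimal I E s t d J tau g u"
    using easy_direction[where s=s and t=t and E=E and I=I and d=d, OF finP assms(3) assms(5) assms(6)] by blast
next
  have finP: "\<And>i. i \<in> I \<Longrightarrow> finite (paths E (s i) (t i))"
    using finite_paths[OF assms(1) assms(2)] assms(4) by blast
  assume "lp_optimal I E s t d J tau g u"
  then show "implementable I E s t d J tau g u"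
    using hard_direction[where s=s and t=t and E=E and I=I and d=d, OF finP assms(3) assms(6) assms(8)] by blast
qed

end
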